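(* Let $\mathcal R$ be a species of tree on $T_0=\{1,\dots,n\}$ and $A=\sum_{T\in\mathcal R}\lambda(T)A(T)$ with $\lambda(T)\in\mathbf Q$. Then $A$ is diagonalizable and its eigenvalues are $0$ and the numbers $$\sum_{T\in\mathcal R,\ T\supset T_1}\lambda(T)\,n(T),\qquad T_1\in\mathcal R.$$
   Context: A species of tree is a family $\mathcal R$ of subsets of $T_0$ containing $T_0$, each of cardinality $\ge 2$, any two of which are either disjoint or nested. $n(T)$ is the cardinality of $T$. For $T$ with $n(T)\ge2$, $A(T)=(\alpha_{i,j})$ is the $n\times n$ matrix with $\alpha_{i,j}=-1$ if $i\ne j$, $\{i,j\}\subset T$, $\alpha_{i,i}=n(T)-1$ if $i\in T$, and $0$ otherwise. *)

theory Defs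
  imports "Jordan_Normal_Form.Char_Poly"
begin

text \<open>Species of tree on T0 = {0..<n} (0-based indices, matching JNF matrix indexing).\<close>
definition species_of_tree :: "nat \<Rightarrow> nat set set \<Rightarrow> bool" where
  "species_of_tree n R \<longleftrightarrow> {0..<n} \<in> R \<and>
     (\<forall>T\<in>R. T \<subseteq> {0..<n} \<and> card T \<ge> 2) \<and>
     (\<forall>S\<in>R. \<forall>T\<in>R. S \<inter> T = {} \<or> S \<subseteq> T \<or> T \<subseteq> S)"

definition tree_mat :: "nat \<Rightarrow> nat set \<Rightarrow> rat mat" where
  "tree_mat n T = mat n n (\<lambda>(i,j).
     if i \<in> T \<and> j \<in> T then (if i = j then of_nat (card T) - 1 else -1) else 0)"

definition species_mat :: "nat \<Rightarrow> nat set set \<Rightarrow> (nat set \<Rightarrow> rat) \<Rightarrow> rat mat" where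
  "species_mat n R lam = mat n n (\<lambda>ij. \<Sum>T\<in>R. lam T * tree_mat n T $$ ij)"

definition diagonalizable_mat :: "'a :: semiring_1 mat \<Rightarrow> bool" where
  "diagonalizable_mat A \<longleftrightarrow> (\<exists>D. diagonal_mat D \<and> similar_mat A D)"

end

theory Submission
  imports Defs
begin



lemma diag_from_orth:
  fixes A :: "rat mat" and v :: "nat \<Rightarrow> rat vec" and c :: "nat \<Rightarrow> rat"
  assumes A: "A \<in> carrier_mat n n"
  and vc: "\<And>i. i<n \<Longrightarrow> v i \<in> carrier_vec n"
  and ev: "\<And>i. i<n \<Longrightarrow> A *\<^sub>v v i = c i \<cdot>\<^sub>v v i"
  and orth: "\<And>i j. i<n \<Longrightarrow> j<n \<Longrightarrow> i\<noteq>j \<Longrightarrow> v i \<bullet> v j = 0"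
  and nz: "\<And>i. i<n \<Longrightarrow> v i \<bullet> v i \<noteq> 0"
  shows "diagonalizable_mat A \<and> {k. eigenvalue A k} = c ` {0..<n}"
proof -
  define P where "P = mat n n (\<lambda>(x,i). v i $ x)"
  define Q where "Q = mat n n (\<lambda>(i,x). v i $ x / (v i \<bullet> v i))"
  define D where "D = mat n n (\<lambda>(i,j). if i = j then c i else 0)"
  have P: "P \<in> carrier_mat n n" and Q: "Q \<in> carrier_mat n n" and D: "D \<in> carrier_mat n n"
    unfolding P_def Q_def D_def by auto
  have dv: "\<And>i. i < n \<Longrightarrow> dim_vec (v i) = n" using vc by auto
  have QP: "Q * P = 1\<^sub>m n"
  proof (rule eq_matI)
    fix i j assume i: "i < dim_row (1\<^sub>m n)" and j: "j < dim_col (1\<^sub>m n)"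
    have "(Q * P) $$ (i,j) = (\<Sum>x\<in>{0..<n}. v i $ x / (v i \<bullet> v i) * v j $ x)"
      using i j unfolding P_def Q_def by (auto simp: scalar_prod_def)
    also have "\<dots> = (v i \<bullet> v j) / (v i \<bullet> v i)"
      using i j dv by (simp add: scalar_prod_def sum_divide_distrib)
    also have "\<dots> = 1\<^sub>m n $$ (i,j)" using i j orth nz by auto
    finally show "(Q * P) $$ (i,j) = 1\<^sub>m n $$ (i,j)" .
  qed (insert P Q, auto)
  have PQ: "P * Q = 1\<^sub>m n" using mat_mult_left_right_inverse[OF Q P QP] .
  have AP: "A * P = P * D"
  proof (rule eq_matI)
    fix x i assume x: "x < dim_row (P * D)" and i: "i < dim_col (P * D)"
    hence x: "x < n" and i: "i < n" using P D by auto
    have "(A * P) $$ (x,i) = (A *\<^sub>v v i) $ x"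
      using x i A vc[OF i] unfolding P_def by (auto simp: mult_mat_vec_def scalar_prod_def)
    also have "\<dots> = c i * v i $ x" using ev[OF i] x vc[OF i] by auto
    also have "\<dots> = (P * D) $$ (x,i)"
    proof -
      have "(P * D) $$ (x,i) = (\<Sum>k\<in>{0..<n}. v k $ x * (if k = i then c i else 0))"
        using x i unfolding P_def D_def by (auto simp: scalar_prod_def intro!: sum.cong)
      also have "\<dots> = v i $ x * c i" using i by (simp add: if_distrib sum.delta cong: if_cong)
      finally show ?thesis by simp
    qed
    finally show "(A * P) $$ (x,i) = (P * D) $$ (x,i)" .
  qed (insert A P D, auto)
  have Aeq: "A = P * D * Q"
  proof -
    have "A = A * (P * Q)" using A PQ by simp
    also have "\<dots> = (A * P) * Q" using A P Q by simp
    finally show ?thesis using AP by simp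
  qed
  have diag: "diagonalizable_mat A"
    unfolding diagonalizable_mat_def
  proof (intro exI conjI)
    show "diagonal_mat D" unfolding D_def diagonal_mat_def by auto
    show "similar_mat A D" by (rule similar_matI[OF _ PQ QP Aeq], insert A P Q D, auto)
  qed
  have "{k. eigenvalue A k} = c ` {0..<n}"
  proof
    show "c ` {0..<n} \<subseteq> {k. eigenvalue A k}"
    proof
      fix k assume "k \<in> c ` {0..<n}"
      then obtain i where i: "i < n" and k: "k = c i" by auto
      have "v i \<noteq> 0\<^sub>v n" using nz[OF i] by auto
      thus "k \<in> {k. eigenvalue A k}" using vc[OF i] ev[OF i] A k
        unfolding eigenvalue_def eigenvector_def by auto
    qed
    show "{k. eigenvalue A k} \<subseteq> c ` {0..<n}"
    proof
      fix k assume "k \<in> {k. eigenvalue A k}"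
      then obtain u where u: "u \<in> carrier_vec n" "u \<noteq> 0\<^sub>v n" "A *\<^sub>v u = k \<cdot>\<^sub>v u"
        using A unfolding eigenvalue_def eigenvector_def by auto
      define z where "z = Q *\<^sub>v u"
      have z: "z \<in> carrier_vec n" using Q u unfolding z_def by auto
      have uz: "u = P *\<^sub>v z" using PQ u P Q unfolding z_def
        by (metis assoc_mult_mat_vec one_mult_mat_vec)
      have "z \<noteq> 0\<^sub>v n" using uz u P by auto
      then obtain i where i: "i < n" and zi: "z $ i \<noteq> 0" using z by (auto simp: vec_eq_iff)
      have "D *\<^sub>v z = Q *\<^sub>v (A *\<^sub>v u)"
      proof -
        have "Q * A * P = Q * (A * P)" using Q A P by simp
        also have "\<dots> = Q * (P * D)" using AP by simp
        also have "\<dots> = (Q * P) * D" using Q P D by simp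
        also have "\<dots> = D" using QP D by simp
        finally have QAP: "Q * A * P = D" .
        have "D *\<^sub>v z = (Q * A * P) *\<^sub>v z" using QAP by simp
        also have "\<dots> = (Q * A) *\<^sub>v (P *\<^sub>v z)" using Q A P z by (meson assoc_mult_mat_vec mult_carrier_mat)
        also have "\<dots> = Q *\<^sub>v (A *\<^sub>v (P *\<^sub>v z))" using Q A P z by (meson assoc_mult_mat_vec mult_mat_vec_carrier)
        finally show ?thesis using uz by simp
      qed
      also have "\<dots> = k \<cdot>\<^sub>v z" using u Q unfolding z_def by (simp add: mult_mat_vec)
      finally have "(D *\<^sub>v z) $ i = k * z $ i" using i z by simp
      moreover have "(D *\<^sub>v z) $ i = c i * z $ i"
      proof -
        have "(D *\<^sub>v z) $ i = (\<Sum>k\<in>{0..<n}. (if i = k then c i else 0) * z $ k)"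
          using i z unfolding D_def by (auto simp: mult_mat_vec_def scalar_prod_def intro!: sum.cong)
        also have "\<dots> = (\<Sum>k\<in>{0..<n}. if k = i then c i * z $ i else 0)"
          by (rule sum.cong) auto
        also have "\<dots> = c i * z $ i" using i by simp
        finally show ?thesis .
      qed
      ultimately have "k = c i" using zi by simp
      thus "k \<in> c ` {0..<n}" using i by auto
    qed
  qed
  with diag show ?thesis by simp
qed




lemma chain_max:
  assumes "finite F" "F \<noteq> {}" "\<And>A B. A \<in> F \<Longrightarrow> B \<in> F \<Longrightarrow> A \<subseteq> B \<or> B \<subseteq> A"
  shows "\<exists>M\<in>F. \<forall>S\<in>F. S \<subseteq> M"
  using assms
proof (induction F rule: finite_ne_induct)
  case (singleton x) then show ?case by auto
next
  case (insert x F)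
  have "\<exists>M\<in>F. \<forall>S\<in>F. S \<subseteq> M" by (rule insert.IH) (use insert.prems in blast)
  then obtain M where M: "M \<in> F" "\<forall>S\<in>F. S \<subseteq> M" by blast
  have "x \<subseteq> M \<or> M \<subseteq> x" using insert.prems M(1) by blast
  then show ?case
  proof
    assume "x \<subseteq> M" then show ?case using M by blast
  next
    assume "M \<subseteq> x" then show ?case using M by blast
  qed
qed

lemma chain_min:
  assumes "finite F" "F \<noteq> {}" "\<And>A B. A \<in> F \<Longrightarrow> B \<in> F \<Longrightarrow> A \<subseteq> B \<or> B \<subseteq> A"
  shows "\<exists>M\<in>F. \<forall>S\<in>F. M \<subseteq> S"
  using assms
proof (induction F rule: finite_ne_induct)
  case (singleton x) then show ?case by auto
next
  case (insert x F)
  have "\<exists>M\<in>F. \<forall>S\<in>F. M \<subseteq> S" by (rule insert.IH) (use insert.prems in blast)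
  then obtain M where M: "M \<in> F" "\<forall>S\<in>F. M \<subseteq> S" by blast
  have "x \<subseteq> M \<or> M \<subseteq> x" using insert.prems M(1) by blast
  then show ?case
  proof
    assume "x \<subseteq> M" then show ?case using M by blast
  next
    assume "M \<subseteq> x" then show ?case using M by blast
  qed
qed
definition tm :: "nat \<Rightarrow> nat set \<Rightarrow> (nat \<Rightarrow> rat) \<Rightarrow> nat \<Rightarrow> rat" where
  "tm n T f x = (\<Sum>y\<in>{0..<n}. tree_mat n T $$ (x,y) * f y)"

lemma species_mult:
  assumes "finite R" "x < n"
  shows "(species_mat n R lam *\<^sub>v vec n f) $ x = (\<Sum>T\<in>R. lam T * tm n T f x)"
proof -
  have "(species_mat n R lam *\<^sub>v vec n f) $ x =
      (\<Sum>y\<in>{0..<n}. (\<Sum>T\<in>R. lam T * tree_mat n T $$ (x,y)) * f y)"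
    using assms unfolding species_mat_def by (simp add: mult_mat_vec_def scalar_prod_def)
  also have "\<dots> = (\<Sum>y\<in>{0..<n}. \<Sum>T\<in>R. lam T * (tree_mat n T $$ (x,y) * f y))"
    by (simp add: sum_distrib_right mult.assoc)
  also have "\<dots> = (\<Sum>T\<in>R. \<Sum>y\<in>{0..<n}. lam T * (tree_mat n T $$ (x,y) * f y))"
    by (rule sum.swap)
  also have "\<dots> = (\<Sum>T\<in>R. lam T * tm n T f x)"
    unfolding tm_def by (simp add: sum_distrib_left)
  finally show ?thesis .
qed

lemma tm_eq:
  assumes T: "T \<subseteq> {0..<n}" and x: "x < n"
  shows "tm n T f x = (if x \<in> T then of_nat (card T) * f x - (\<Sum>y\<in>T. f y) else 0)"
proof -
  have fin: "finite T" using T finite_subset by blast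
  have "tm n T f x = (\<Sum>y\<in>{0..<n}. if y \<in> T then
        (if x \<in> T then ((if x = y then of_nat (card T) else 0) - 1) * f y else 0) else 0)"
    unfolding tm_def using x by (intro sum.cong) (auto simp: tree_mat_def)
  also have "\<dots> = (\<Sum>y\<in>{0..<n} \<inter> T.
        (if x \<in> T then ((if x = y then of_nat (card T) else 0) - 1) * f y else 0))"
    by (simp add: sum.inter_restrict)
  also have "{0..<n} \<inter> T = T" using T by auto
  also have "(\<Sum>y\<in>T. (if x \<in> T then ((if x = y then of_nat (card T) else 0) - 1) * f y else 0))
     = (if x \<in> T then of_nat (card T) * f x - (\<Sum>y\<in>T. f y) else 0)"
  proof (cases "x \<in> T")
    case True
    have "(\<Sum>y\<in>T. ((if x = y then of_nat (card T) else 0) - 1) * f y)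
        = (\<Sum>y\<in>T. (if x = y then of_nat (card T) * f y else 0)) - (\<Sum>y\<in>T. f y)"
      by (subst sum_subtractf[symmetric]) (rule sum.cong, auto simp: algebra_simps)
    also have "\<dots> = of_nat (card T) * f x - (\<Sum>y\<in>T. f y)" using True fin by simp
    finally show ?thesis using True by simp
  qed simp
  finally show ?thesis .
qed

lemma tm_const:
  assumes T: "T \<subseteq> {0..<n}" and x: "x < n" and c: "\<And>a b. a \<in> T \<Longrightarrow> b \<in> T \<Longrightarrow> f a = f b"
  shows "tm n T f x = 0"
proof (cases "x \<in> T")
  case True
  have "(\<Sum>y\<in>T. f y) = (\<Sum>y\<in>T. f x)"
  proof (rule sum.cong)
    fix y assume "y \<in> T" then show "f y = f x" using c[of y x] True by blast
  qed simp
  then show ?thesis using tm_eq[OF T x] True by simp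
qed (simp add: tm_eq[OF T x])

lemma tm_sumzero:
  assumes T: "T \<subseteq> {0..<n}" and x: "x < n" and z: "\<And>y. y \<notin> T \<Longrightarrow> f y = 0"
    and s: "(\<Sum>y\<in>T. f y) = 0"
  shows "tm n T f x = of_nat (card T) * f x"
proof (cases "x \<in> T")
  case False then show ?thesis using tm_eq[OF T x] z[OF False] by simp
qed (use tm_eq[OF T x] s in simp)




locale sp =
  fixes n :: nat and R :: "nat set set" and lam :: "nat set \<Rightarrow> rat"
  assumes spec: "species_of_tree n R"
begin

lemma T0: "{0..<n} \<in> R" using spec unfolding species_of_tree_def by blast
lemma Rsub: "T \<in> R \<Longrightarrow> T \<subseteq> {0..<n}" using spec unfolding species_of_tree_def by blast
lemma Rcard: "T \<in> R \<Longrightarrow> 2 \<le> card T" using spec unfolding species_of_tree_def by blast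
lemma lamin: "S \<in> R \<Longrightarrow> T \<in> R \<Longrightarrow> S \<inter> T = {} \<or> S \<subseteq> T \<or> T \<subseteq> S"
  using spec unfolding species_of_tree_def by blast
lemma finR: "finite R"
proof -
  have "R \<subseteq> Pow {0..<n}" using Rsub by blast
  then show ?thesis by (rule finite_subset) simp
qed
lemma n2: "2 \<le> n" using Rcard[OF T0] by simp
lemma finT: "T \<in> R \<Longrightarrow> finite T" using Rsub finite_subset by blast
lemma nest: "S \<in> R \<Longrightarrow> T \<in> R \<Longrightarrow> x \<in> S \<Longrightarrow> x \<in> T \<Longrightarrow> S \<subseteq> T \<or> T \<subseteq> S"
  using lamin by blast

definition part :: "nat set \<Rightarrow> nat \<Rightarrow> nat set" where
  "part T x = insert x (\<Union>{S\<in>R. x \<in> S \<and> S \<subset> T})"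

lemma part_mem: "x \<in> part T x" unfolding part_def by blast
lemma part_sub: "x \<in> T \<Longrightarrow> part T x \<subseteq> T" unfolding part_def by blast
lemma part_S: "S \<in> R \<Longrightarrow> S \<subset> T \<Longrightarrow> x \<in> S \<Longrightarrow> S \<subseteq> part T x" unfolding part_def by blast

lemma part_sym: assumes "y \<in> part T x" shows "x \<in> part T y"
proof (cases "y = x")
  case False
  then obtain S where "S \<in> R" "x \<in> S" "S \<subset> T" "y \<in> S" using assms unfolding part_def by blast
  then show ?thesis unfolding part_def by blast
qed (simp add: part_mem)

lemma part_sub1: assumes y: "y \<in> part T x" shows "part T y \<subseteq> part T x"
proof (cases "y = x")
  case False
  then obtain S where S: "S \<in> R" "x \<in> S" "S \<subset> T" "y \<in> S" using y unfolding part_def by blast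
  show ?thesis
  proof
    fix z assume z: "z \<in> part T y"
    show "z \<in> part T x"
    proof (cases "z = y")
      case True then show ?thesis using S part_S by blast
    next
      case False
      then obtain S' where S': "S' \<in> R" "y \<in> S'" "S' \<subset> T" "z \<in> S'" using z unfolding part_def by blast
      have "S' \<subseteq> S \<or> S \<subseteq> S'" using nest[OF S'(1) S(1) S'(2) S(4)] .
      then show ?thesis
      proof
        assume "S' \<subseteq> S" then show ?thesis using S S'(4) part_S by blast
      next
        assume "S \<subseteq> S'" then show ?thesis using S S' part_S by blast
      qed
    qed
  qed
qed simp

lemma part_eq: "y \<in> part T x \<Longrightarrow> part T y = part T x"
  by (meson part_sub1 part_sym subset_antisym)

lemma part_neq: assumes T: "T \<in> R" and x: "x \<in> T" shows "part T x \<noteq> T"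
proof -
  define F where "F = {S\<in>R. x \<in> S \<and> S \<subset> T}"
  show ?thesis
  proof (cases "F = {}")
    case True
    then have "part T x = {x}" unfolding part_def F_def by auto
    moreover have "T \<noteq> {x}" using Rcard[OF T] by auto
    ultimately show ?thesis by simp
  next
    case False
    have fin: "finite F" using finR unfolding F_def by simp
    have ch: "\<And>A B. A \<in> F \<Longrightarrow> B \<in> F \<Longrightarrow> A \<subseteq> B \<or> B \<subseteq> A"
      unfolding F_def using nest by blast
    obtain M where M: "M \<in> F" "\<forall>S\<in>F. S \<subseteq> M" using chain_max[OF fin False ch] by blast
    have "part T x = M" unfolding part_def F_def[symmetric] using M unfolding F_def by blast
    then show ?thesis using M(1) unfolding F_def by blast
  qed
qed

definition topP :: "nat \<Rightarrow> nat set \<Rightarrow> bool" where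
  "topP i T \<longleftrightarrow> T \<in> R \<and> i \<in> T \<and> (\<exists>x\<in>T. x < i) \<and> (\<forall>S\<in>R. i \<in> S \<and> (\<exists>x\<in>S. x < i) \<longrightarrow> T \<subseteq> S)"

definition top :: "nat \<Rightarrow> nat set" where "top i = (SOME T. topP i T)"

lemma top_ex: assumes "0 < i" "i < n" shows "\<exists>T. topP i T"
proof -
  define F where "F = {S\<in>R. i \<in> S \<and> (\<exists>x\<in>S. x < i)}"
  have "{0..<n} \<in> F" unfolding F_def using T0 assms by auto
  hence ne: "F \<noteq> {}" by blast
  have fin: "finite F" using finR unfolding F_def by simp
  have ch: "\<And>A B. A \<in> F \<Longrightarrow> B \<in> F \<Longrightarrow> A \<subseteq> B \<or> B \<subseteq> A"
    unfolding F_def using nest by blast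
  obtain M where M: "M \<in> F" "\<forall>S\<in>F. M \<subseteq> S" using chain_min[OF fin ne ch] by blast
  have "topP i M" unfolding topP_def using M unfolding F_def by blast
  then show ?thesis by blast
qed

lemma topP_top: "0 < i \<Longrightarrow> i < n \<Longrightarrow> topP i (top i)"
  unfolding top_def using top_ex by (rule someI_ex) 

lemma topP_unique: "topP i T \<Longrightarrow> topP i T' \<Longrightarrow> T = T'"
  unfolding topP_def by blast

definition B :: "nat \<Rightarrow> nat set" where "B i = part (top i) i"
definition L :: "nat \<Rightarrow> nat set" where "L i = {x \<in> top i. \<exists>y \<in> part (top i) x. y < i}"
definition w :: "nat \<Rightarrow> nat \<Rightarrow> rat" where
  "w i x = (if x \<in> L i then of_nat (card (B i)) else if x \<in> B i then - of_nat (card (L i)) else 0)"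

context
  fixes i assumes i0: "0 < i" and inn: "i < n"
begin

lemma topR: "top i \<in> R" and i_top: "i \<in> top i" and top_lt: "\<exists>x\<in>top i. x < i"
  and top_min: "S \<in> R \<Longrightarrow> i \<in> S \<Longrightarrow> x \<in> S \<Longrightarrow> x < i \<Longrightarrow> top i \<subseteq> S"
  using topP_top[OF i0 inn] unfolding topP_def by blast+

lemma B_ge: assumes y: "y \<in> B i" shows "i \<le> y"
proof (cases "y = i")
  case False
  then obtain S where S: "S \<in> R" "i \<in> S" "S \<subset> top i" "y \<in> S" using y unfolding B_def part_def by blast
  show ?thesis
  proof (rule ccontr)
    assume "\<not> i \<le> y" hence "y < i" by simp
    then have "top i \<subseteq> S" using top_min S by blast
    then show False using S(3) by blast
  qed
qed simp

lemma B_sub: "B i \<subseteq> top i" unfolding B_def using part_sub i_top by blast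
lemma L_sub: "L i \<subseteq> top i" unfolding L_def by blast
lemma finTop: "finite (top i)" using finT topR by blast
lemma finB: "finite (B i)" using B_sub finTop finite_subset by blast
lemma finL: "finite (L i)" using L_sub finTop finite_subset by blast

lemma memB_iff: "x \<in> B i \<longleftrightarrow> part (top i) x = B i"
  unfolding B_def using part_eq part_mem by metis

lemma LB_disj: "x \<in> L i \<Longrightarrow> x \<notin> B i"
proof
  assume xL: "x \<in> L i" and xB: "x \<in> B i"
  then obtain y where y: "y \<in> part (top i) x" "y < i" unfolding L_def by blast
  have "part (top i) x = B i" using xB memB_iff by blast
  then show False using y B_ge by force
qed

lemma i_B: "i \<in> B i" unfolding B_def by (rule part_mem)
lemma i_notL: "i \<notin> L i" using LB_disj i_B by blast
lemma L_ne: "L i \<noteq> {}"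
proof -
  obtain x where "x \<in> top i" "x < i" using top_lt by blast
  then have "x \<in> L i" unfolding L_def using part_mem by blast
  then show ?thesis by blast
qed

lemma w_zero: "x \<notin> top i \<Longrightarrow> w i x = 0"
  unfolding w_def using B_sub L_sub by auto

lemma w_sum: assumes A: "finite A" "L i \<union> B i \<subseteq> A" shows "(\<Sum>x\<in>A. w i x) = 0"
proof -
  have "(\<Sum>x\<in>A. w i x) = (\<Sum>x\<in>A. (if x \<in> L i then of_nat (card (B i)) else 0)
      + (if x \<in> B i then - of_nat (card (L i)) else 0))"
  proof (rule sum.cong)
    fix x assume "x \<in> A"
    show "w i x = (if x \<in> L i then of_nat (card (B i)) else 0)
      + (if x \<in> B i then - of_nat (card (L i)) else 0)"
    proof (cases "x \<in> L i")
      case True then have "x \<notin> B i" by (rule LB_disj)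
      then show ?thesis using True unfolding w_def by simp
    next
      case False then show ?thesis unfolding w_def by simp
    qed
  qed simp
  also have "\<dots> = (\<Sum>x\<in>A \<inter> L i. of_nat (card (B i))) + (\<Sum>x\<in>A \<inter> B i. - of_nat (card (L i)))"
    by (simp only: sum.distrib sum.inter_restrict[OF A(1)])
  also have "A \<inter> L i = L i" using A by blast
  also have "A \<inter> B i = B i" using A by blast
  finally show ?thesis by simp
qed

lemma w_const: assumes S: "S \<in> R" "S \<subset> top i" and a: "a \<in> S" and b: "b \<in> S"
  shows "w i a = w i b"
proof -
  have pab: "part (top i) a = part (top i) b"
    using part_eq part_S[OF S b] a by blast
  have at: "a \<in> top i" and bt: "b \<in> top i" using S a b by auto
  have "a \<in> L i \<longleftrightarrow> b \<in> L i" unfolding L_def using pab at bt by auto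
  moreover have "a \<in> B i \<longleftrightarrow> b \<in> B i" using memB_iff pab by simp
  ultimately show ?thesis unfolding w_def by simp
qed

end

end




lemma orth_gen:
  fixes u v :: "nat \<Rightarrow> rat"
  assumes U: "U \<subseteq> {0..<n}" and z: "\<And>x. x \<notin> U \<Longrightarrow> u x = 0" and s: "(\<Sum>x\<in>U. u x) = 0"
    and c: "\<And>x. x \<in> U \<Longrightarrow> v x = k"
  shows "(\<Sum>x\<in>{0..<n}. u x * v x) = 0" "(\<Sum>x\<in>{0..<n}. v x * u x) = 0"
proof -
  have "(\<Sum>x\<in>{0..<n}. u x * v x) = (\<Sum>x\<in>U. u x * v x)"
    by (rule sum.mono_neutral_right) (use U z in auto)
  also have "\<dots> = (\<Sum>x\<in>U. u x * k)" by (rule sum.cong) (use c in auto)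
  also have "\<dots> = 0" using s by (simp add: sum_distrib_right[symmetric])
  finally show "(\<Sum>x\<in>{0..<n}. u x * v x) = 0" .
  then show "(\<Sum>x\<in>{0..<n}. v x * u x) = 0" by (simp add: mult.commute)
qed

context sp begin

definition mu :: "nat set \<Rightarrow> rat" where
  "mu T1 = (\<Sum>T\<in>{T\<in>R. T1 \<subseteq> T}. lam T * of_nat (card T))"

lemma eig:
  assumes T1: "T1 \<in> R" and z: "\<And>y. y \<notin> T1 \<Longrightarrow> f y = 0" and s: "(\<Sum>y\<in>T1. f y) = 0"
    and c: "\<And>S a b. S \<in> R \<Longrightarrow> S \<subset> T1 \<Longrightarrow> a \<in> S \<Longrightarrow> b \<in> S \<Longrightarrow> f a = f b"
    and x: "x < n"
  shows "(\<Sum>T\<in>R. lam T * tm n T f x) = mu T1 * f x"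
proof -
  have "(\<Sum>T\<in>R. lam T * tm n T f x) = (\<Sum>T\<in>R. if T1 \<subseteq> T then lam T * of_nat (card T) * f x else 0)"
  proof (rule sum.cong)
    fix T assume T: "T \<in> R"
    show "lam T * tm n T f x = (if T1 \<subseteq> T then lam T * of_nat (card T) * f x else 0)"
    proof (cases "T1 \<subseteq> T")
      case True
      have zT: "\<And>y. y \<notin> T \<Longrightarrow> f y = 0" using z True by blast
      have "(\<Sum>y\<in>T. f y) = (\<Sum>y\<in>T1. f y)"
        by (rule sum.mono_neutral_right) (use True finT[OF T] z in auto)
      then have "tm n T f x = of_nat (card T) * f x"
        using tm_sumzero[OF Rsub[OF T] x zT] s by simp
      then show ?thesis using True by simp
    next
      case False
      have cT: "\<And>a b. a \<in> T \<Longrightarrow> b \<in> T \<Longrightarrow> f a = f b"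
      proof -
        fix a b assume a: "a \<in> T" and b: "b \<in> T"
        have "T \<inter> T1 = {} \<or> T \<subset> T1" using lamin[OF T T1] False by auto
        then show "f a = f b"
        proof
          assume "T \<inter> T1 = {}"
          then have "a \<notin> T1" "b \<notin> T1" using a b by auto
          then show ?thesis using z by metis
        next
          assume h: "T \<subset> T1" show ?thesis using c[OF T h a b] .
        qed
      qed
      have "tm n T f x = 0" using tm_const[OF Rsub[OF T] x cT] .
      then show ?thesis using False by simp
    qed
  qed simp
  also have "\<dots> = (\<Sum>T\<in>{T\<in>R. T1 \<subseteq> T}. lam T * of_nat (card T) * f x)"
    by (simp add: sum.inter_filter finR)
  also have "\<dots> = mu T1 * f x" unfolding mu_def by (simp add: sum_distrib_right)
  finally show ?thesis .
qed

definition vf :: "nat \<Rightarrow> nat \<Rightarrow> rat" where "vf i = (if i = 0 then (\<lambda>_. 1) else w i)"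
definition cc :: "nat \<Rightarrow> rat" where "cc i = (if i = 0 then 0 else mu (top i))"

lemma smat: "species_mat n R lam \<in> carrier_mat n n" unfolding species_mat_def by simp

lemma eigvec: assumes i: "i < n"
  shows "species_mat n R lam *\<^sub>v vec n (vf i) = cc i \<cdot>\<^sub>v vec n (vf i)"
proof (rule eq_vecI)
  show "dim_vec (species_mat n R lam *\<^sub>v vec n (vf i)) = dim_vec (cc i \<cdot>\<^sub>v vec n (vf i))"
    using smat by simp
  fix x assume "x < dim_vec (cc i \<cdot>\<^sub>v vec n (vf i))"
  hence x: "x < n" by simp
  have "(species_mat n R lam *\<^sub>v vec n (vf i)) $ x = (\<Sum>T\<in>R. lam T * tm n T (vf i) x)"
    by (rule species_mult[OF finR x])
  also have "\<dots> = cc i * vf i x"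
  proof (cases "i = 0")
    case True
    have "\<And>T. T \<in> R \<Longrightarrow> tm n T (vf i) x = 0"
      using tm_const[OF Rsub x] True unfolding vf_def by simp
    then show ?thesis using True unfolding cc_def by simp
  next
    case False
    hence i0: "0 < i" by simp
    have "(\<Sum>T\<in>R. lam T * tm n T (w i) x) = mu (top i) * w i x"
    proof (rule eig[OF topR[OF i0 i] _ _ _ x])
      show "\<And>y. y \<notin> top i \<Longrightarrow> w i y = 0" using w_zero[OF i0 i] .
      show "(\<Sum>y\<in>top i. w i y) = 0"
        using w_sum[OF i0 i finTop[OF i0 i]] B_sub[OF i0 i] L_sub[OF i0 i] by blast
      show "\<And>S a b. S \<in> R \<Longrightarrow> S \<subset> top i \<Longrightarrow> a \<in> S \<Longrightarrow> b \<in> S \<Longrightarrow> w i a = w i b"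
        using w_const[OF i0 i] by blast
    qed
    then show ?thesis using False unfolding vf_def cc_def by simp
  qed
  also have "\<dots> = (cc i \<cdot>\<^sub>v vec n (vf i)) $ x" using x by simp
  finally show "(species_mat n R lam *\<^sub>v vec n (vf i)) $ x = (cc i \<cdot>\<^sub>v vec n (vf i)) $ x" .
qed

lemma dotvec: "vec n f \<bullet> vec n g = (\<Sum>x\<in>{0..<n}. f x * g x)"
  unfolding scalar_prod_def by simp

lemma top_sub: "0 < i \<Longrightarrow> i < n \<Longrightarrow> top i \<subseteq> {0..<n}" using Rsub topR by blast

lemma orth_lt: assumes ij: "i < j" and j: "j < n"
  shows "(\<Sum>x\<in>{0..<n}. vf i x * vf j x) = 0"
proof -
  have j0: "0 < j" using ij by simp
  have wj_sum: "(\<Sum>y\<in>top j. w j y) = 0"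
    using w_sum[OF j0 j finTop[OF j0 j]] B_sub[OF j0 j] L_sub[OF j0 j] by blast
  show ?thesis
  proof (cases "i = 0")
    case True
    have c1: "\<And>x. x \<in> top j \<Longrightarrow> (\<lambda>_. 1::rat) x = 1" by simp
    have "(\<Sum>x\<in>{0..<n}. w j x * (\<lambda>_. 1::rat) x) = 0"
      by (rule orth_gen(1)[OF top_sub[OF j0 j] w_zero[OF j0 j] wj_sum c1])
    then show ?thesis using True j0 unfolding vf_def by simp
  next
    case False
    hence i0: "0 < i" and i: "i < n" using ij j by auto
    have wi_sum: "(\<Sum>y\<in>top i. w i y) = 0"
      using w_sum[OF i0 i finTop[OF i0 i]] B_sub[OF i0 i] L_sub[OF i0 i] by blast
    have "(\<Sum>x\<in>{0..<n}. w i x * w j x) = 0"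
    proof -
      consider "top i \<inter> top j = {}" | "top i = top j" | "top i \<subset> top j" | "top j \<subset> top i"
        using lamin[OF topR[OF i0 i] topR[OF j0 j]] by blast
      then show ?thesis
      proof cases
        case 1
        have c0: "\<And>x. x \<in> top i \<Longrightarrow> w j x = 0" using 1 w_zero[OF j0 j] by blast
        show ?thesis
          using orth_gen(1)[OF top_sub[OF i0 i] w_zero[OF i0 i] wi_sum c0] by simp
      next
        case 2
        define U where "U = L i \<union> B i"
        have U: "U \<subseteq> {0..<n}" using top_sub[OF i0 i] B_sub[OF i0 i] L_sub[OF i0 i] unfolding U_def by blast
        have finU: "finite U" using U finite_subset by blast
        have zU: "\<And>x. x \<notin> U \<Longrightarrow> w i x = 0" unfolding U_def w_def by auto
        have sU: "(\<Sum>x\<in>U. w i x) = 0" using w_sum[OF i0 i finU] unfolding U_def by blast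
        have cU: "w j x = of_nat (card (B j))" if x: "x \<in> U" for x
        proof -
          have xt: "x \<in> top i" using x B_sub[OF i0 i] L_sub[OF i0 i] unfolding U_def by blast
          have "\<exists>y\<in>part (top i) x. y < j"
          proof (cases "x \<in> L i")
            case True
            then obtain y where "y \<in> part (top i) x" "y < i" unfolding L_def by blast
            then show ?thesis using ij by (meson less_trans)
          next
            case False
            then have "x \<in> B i" using x unfolding U_def by blast
            then have "part (top i) x = B i" using memB_iff[OF i0 i] by blast
            then show ?thesis using i_B[OF i0 i] ij by force
          qed
          then have "x \<in> L j" unfolding L_def using xt 2 by simp
          then show ?thesis unfolding w_def by simp
        qed
        show ?thesis by (rule orth_gen(1)[OF U zU sU cU])
      next
        case 3
        have c3: "\<And>x. x \<in> top i \<Longrightarrow> w j x = w j i"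
          using w_const[OF j0 j topR[OF i0 i] 3 _ i_top[OF i0 i]] by blast
        show ?thesis
          using orth_gen(1)[OF top_sub[OF i0 i] w_zero[OF i0 i] wi_sum c3] by simp
      next
        case 4
        have c4: "\<And>x. x \<in> top j \<Longrightarrow> w i x = w i j"
          using w_const[OF i0 i topR[OF j0 j] 4 _ i_top[OF j0 j]] by blast
        show ?thesis
          using orth_gen(2)[OF top_sub[OF j0 j] w_zero[OF j0 j] wj_sum c4] by simp
      qed
    qed
    then show ?thesis using i0 j0 unfolding vf_def by simp
  qed
qed

lemma orth: assumes "i < n" "j < n" "i \<noteq> j" shows "vec n (vf i) \<bullet> vec n (vf j) = 0"
proof (cases "i < j")
  case True then show ?thesis using orth_lt assms unfolding dotvec by blast
next
  case False
  then have "j < i" using assms by simp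
  then have "(\<Sum>x\<in>{0..<n}. vf j x * vf i x) = 0" using orth_lt assms by blast
  then show ?thesis unfolding dotvec by (simp add: mult.commute)
qed

lemma nz: assumes i: "i < n" shows "vec n (vf i) \<bullet> vec n (vf i) \<noteq> 0"
proof -
  have vi: "vf i i \<noteq> 0"
  proof (cases "i = 0")
    case True then show ?thesis unfolding vf_def by simp
  next
    case False
    hence i0: "0 < i" by simp
    have "card (L i) \<noteq> 0" using finL[OF i0 i] L_ne[OF i0 i] by simp
    then show ?thesis using False i_notL[OF i0 i] i_B[OF i0 i] unfolding vf_def w_def by simp
  qed
  have "0 < (\<Sum>x\<in>{0..<n}. vf i x * vf i x)"
    by (rule sum_pos2[of _ i]) (use i vi in \<open>auto simp: zero_less_mult_iff linorder_neq_iff\<close>)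
  then show ?thesis unfolding dotvec by simp
qed

lemma evset: "cc ` {0..<n} = insert 0 (mu ` R)"
proof
  show "cc ` {0..<n} \<subseteq> insert 0 (mu ` R)"
    unfolding cc_def using topR by auto
  show "insert 0 (mu ` R) \<subseteq> cc ` {0..<n}"
  proof
    fix k assume "k \<in> insert 0 (mu ` R)"
    then consider "k = 0" | T1 where "T1 \<in> R" "k = mu T1" by blast
    then show "k \<in> cc ` {0..<n}"
    proof cases
      case 1
      have "cc 0 = 0" unfolding cc_def by simp
      moreover have "0 < n" using n2 by simp
      ultimately show ?thesis using 1 by force
    next
      case 2
      note T1 = 2(1)
      have finT1: "finite T1" using finT[OF T1] .
      have neT1: "T1 \<noteq> {}" using Rcard[OF T1] by auto
      define m where "m = Min T1"
      have m: "m \<in> T1" unfolding m_def using finT1 neT1 by simp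
      have "part T1 m \<noteq> T1" using part_neq[OF T1 m] .
      moreover have "part T1 m \<subseteq> T1" using part_sub[OF m] .
      ultimately obtain y where y: "y \<in> T1" "y \<notin> part T1 m" by blast
      define i where "i = Min (part T1 y)"
      have finp: "finite (part T1 y)" using part_sub[OF y(1)] finT1 finite_subset by blast
      have ip: "i \<in> part T1 y" unfolding i_def using finp part_mem by (metis Min_in empty_iff)
      have pi: "part T1 i = part T1 y" using part_eq[OF ip] .
      have iT: "i \<in> T1" using ip part_sub[OF y(1)] by blast
      have mi: "m \<le> i" unfolding m_def using finT1 iT by simp
      have "m \<noteq> i"
      proof
        assume "m = i" then have "part T1 m = part T1 y" using pi by simp
        then show False using y part_mem by blast
      qed
      with mi have mi': "m < i" by simp
      have i0: "0 < i" using mi' by simp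
      have "i < n" using iT Rsub[OF T1] by auto
      note i = this
      have "topP i T1"
        unfolding topP_def
      proof (intro conjI ballI impI)
        show "T1 \<in> R" "i \<in> T1" by (fact T1, fact iT)
        show "\<exists>x\<in>T1. x < i" using m mi' by blast
        fix S assume S: "S \<in> R" and h: "i \<in> S \<and> (\<exists>x\<in>S. x < i)"
        then obtain x where x: "x \<in> S" "x < i" by blast
        show "T1 \<subseteq> S"
        proof (rule ccontr)
          assume ns: "\<not> T1 \<subseteq> S"
          have "S \<subseteq> T1" using nest[OF S T1 _ iT] h ns by blast
          with ns have "S \<subset> T1" by blast
          then have "S \<subseteq> part T1 i" using part_S[OF S] h by blast
          then have "x \<in> part T1 y" using x pi by blast
          then have "i \<le> x" unfolding i_def using finp by simp
          then show False using x by simp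
        qed
      qed
      then have "top i = T1" using topP_unique topP_top[OF i0 i] by blast
      then have "cc i = k" unfolding cc_def using 2 i0 by simp
      then show ?thesis using i by force
    qed
  qed
qed

end

theorem mainTheorem8:
  fixes n :: nat and R :: "nat set set" and lam :: "nat set \<Rightarrow> rat"
  assumes "species_of_tree n R"
  shows "diagonalizable_mat (species_mat n R lam) \<and>
    {k. eigenvalue (species_mat n R lam) k} =
      insert 0 ((\<lambda>T1. \<Sum>T\<in>{T\<in>R. T1 \<subseteq> T}. lam T * of_nat (card T)) ` R)"
proof -
  interpret sp n R lam by (rule sp.intro) (rule assms)
  have "diagonalizable_mat (species_mat n R lam) \<and>
    {k. eigenvalue (species_mat n R lam) k} = cc ` {0..<n}"
    by (rule diag_from_orth[OF smat _ eigvec orth nz]) auto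
  moreover have feq: "(\<lambda>T1. \<Sum>T\<in>{T\<in>R. T1 \<subseteq> T}. lam T * of_nat (card T)) = mu"
    unfolding mu_def by (rule refl)
  ultimately show ?thesis unfolding feq using evset by simp
qed


end
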